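(* Let $\Gamma$ be a metrized graph and let $p,q,s,t,u\in\Gamma$ with $p\neq q$. Then $$j_u(t,s)=j_u^{\Gamma_{pq}}(t,s)+\frac{\big(j_p(q,t)-j_p(q,u)\big)^2+\big(j_p(q,s)-j_p(q,u)\big)^2-\big(j_p(q,t)-j_p(q,s)\big)^2}{2r(p,q)}$$ $$=j_u^{\Gamma_{pq}}(t,s)+\frac{1}{r(p,q)}\big(j_p(q,u)-j_p(q,t)\big)\big(j_p(q,u)-j_p(q,s)\big).$$
   Context: A metrized graph $\Gamma$ is a finite connected graph (multiple edges and self-loops allowed) in which each edge is identified with a closed line segment of positive length. $\Gamma$ is regarded as a resistive electric circuit in which each edge is a resistor whose resistance equals its length. $r(x,y)$ is the effective resistance between $x$ and $y$; $j_z(x,y)$ is the voltage at $x$ when a unit current enters at $y$ and exits at $z$, with reference voltage $0$ at $z$. $\Gamma_{pq}$ is the metrized graph obtained from $\Gamma$ by identifying $p$ and $q$, and $j^{\Gamma_{pq}}$ is its voltage function. *)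

theory Defs
  imports "HOL-Analysis.Analysis"
begin

text \<open>A metrized graph is given by a combinatorial model: a finite connected multigraph
(self-loops and multiple edges allowed) whose edges carry positive lengths.  Each edge e is
identified with the segment [0, len e], position 0 being src e and position len e being tgt e.\<close>

record ('v, 'e) mgraph =
  verts :: "'v set"
  edges :: "'e set"
  src   :: "'e \<Rightarrow> 'v"
  tgt   :: "'e \<Rightarrow> 'v"
  len   :: "'e \<Rightarrow> real"

definition adj :: "('v, 'e) mgraph \<Rightarrow> ('v \<times> 'v) set" where
  "adj G = {(src G e, tgt G e) | e. e \<in> edges G} \<union> {(tgt G e, src G e) | e. e \<in> edges G}"

definition metrized_graph :: "('v, 'e) mgraph \<Rightarrow> bool" where
  "metrized_graph G \<longleftrightarrow>
     finite (verts G) \<and> verts G \<noteq> {} \<and> finite (edges G) \<and>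
     (\<forall>e\<in>edges G. src G e \<in> verts G \<and> tgt G e \<in> verts G \<and> len G e > 0) \<and>
     (\<forall>v\<in>verts G. \<forall>w\<in>verts G. (v, w) \<in> (adj G)\<^sup>*)"

datatype ('v, 'e) point = Vert 'v | Inner 'e real

definition points :: "('v, 'e) mgraph \<Rightarrow> ('v, 'e) point set" where
  "points G = Vert ` verts G \<union> {Inner e t | e t. e \<in> edges G \<and> 0 < t \<and> t < len G e}"

definition pt :: "('v, 'e) mgraph \<Rightarrow> 'e \<Rightarrow> real \<Rightarrow> ('v, 'e) point" where
  "pt G e t = (if t = 0 then Vert (src G e) else if t = len G e then Vert (tgt G e) else Inner e t)"

definition rslope :: "('v, 'e) mgraph \<Rightarrow> (('v, 'e) point \<Rightarrow> real) \<Rightarrow> 'e \<Rightarrow> real \<Rightarrow> real" where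
  "rslope G f e t = (THE D. ((\<lambda>s. f (pt G e s)) has_real_derivative D) (at t within {t..len G e}))"

definition lslope :: "('v, 'e) mgraph \<Rightarrow> (('v, 'e) point \<Rightarrow> real) \<Rightarrow> 'e \<Rightarrow> real \<Rightarrow> real" where
  "lslope G f e t = (THE D. ((\<lambda>s. f (pt G e s)) has_real_derivative D) (at t within {0..t}))"

fun outslope :: "('v, 'e) mgraph \<Rightarrow> (('v, 'e) point \<Rightarrow> real) \<Rightarrow> ('v, 'e) point \<Rightarrow> real" where
  "outslope G f (Vert v) =
     (\<Sum>e\<in>{e\<in>edges G. src G e = v}. rslope G f e 0) +
     (\<Sum>e\<in>{e\<in>edges G. tgt G e = v}. - lslope G f e (len G e))"
| "outslope G f (Inner e t) = rslope G f e t - lslope G f e t"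

text \<open>The metrized graph obtained by identifying all points of the set A to a single point
(A = {} gives the graph itself; A = {p,q} gives \<Gamma>_pq).  Its points are the classes
cls A w.\<close>
definition cls :: "('v, 'e) point set \<Rightarrow> ('v, 'e) point \<Rightarrow> ('v, 'e) point set" where
  "cls A w = (if w \<in> A then A else {w})"

text \<open>f is a voltage function (potential) on \<Gamma> with the points of A identified, for a unit
current entering at y and exiting at z: f is continuous along every edge, piecewise linear
with possible breaks only at y, z and the identified points, constant on identified classes,
and satisfies Kirchhoff's law: at each point (class) the sum of outgoing slopes equals
-1 at the entry point, +1 at the exit point and 0 elsewhere (resistance = length).\<close>
definition potential ::
  "('v, 'e) mgraph \<Rightarrow> ('v, 'e) point set \<Rightarrow> ('v, 'e) point \<Rightarrow> ('v, 'e) point \<Rightarrow>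
   (('v, 'e) point \<Rightarrow> real) \<Rightarrow> bool" where
  "potential G A y z f \<longleftrightarrow>
     (\<forall>e\<in>edges G. continuous_on {0..len G e} (\<lambda>s. f (pt G e s))) \<and>
     (\<forall>e\<in>edges G. \<forall>a b. 0 \<le> a \<and> a \<le> b \<and> b \<le> len G e \<and>
         (\<forall>s. a < s \<and> s < b \<longrightarrow> pt G e s \<notin> {y, z} \<union> A) \<longrightarrow>
         (\<exists>\<alpha> \<beta>. \<forall>s\<in>{a..b}. f (pt G e s) = \<alpha> + \<beta> * s)) \<and>
     (\<forall>w\<in>A. \<forall>w'\<in>A. f w = f w') \<and>
     (\<forall>w\<in>points G.
        (\<Sum>w'\<in>cls A w. outslope G f w') =
          (if z \<in> cls A w then 1 else 0) - (if y \<in> cls A w then 1 else 0))"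

text \<open>Voltage at x when unit current enters at y and exits at z, reference voltage 0 at z,
on \<Gamma> with the points of A identified.\<close>
definition voltage ::
  "('v, 'e) mgraph \<Rightarrow> ('v, 'e) point set \<Rightarrow> ('v, 'e) point \<Rightarrow> ('v, 'e) point \<Rightarrow>
   ('v, 'e) point \<Rightarrow> real" where
  "voltage G A z x y = (THE v. \<exists>f. potential G A y z f \<and> f z = 0 \<and> f x = v)"

definition jv :: "('v, 'e) mgraph \<Rightarrow> ('v, 'e) point \<Rightarrow> ('v, 'e) point \<Rightarrow> ('v, 'e) point \<Rightarrow> real" where
  "jv G z x y = voltage G {} z x y"

definition jpq :: "('v, 'e) mgraph \<Rightarrow> ('v, 'e) point \<Rightarrow> ('v, 'e) point \<Rightarrow>
    ('v, 'e) point \<Rightarrow> ('v, 'e) point \<Rightarrow> ('v, 'e) point \<Rightarrow> real" where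
  "jpq G p q z x y = voltage G {p, q} z x y"

definition reff :: "('v, 'e) mgraph \<Rightarrow> ('v, 'e) point \<Rightarrow> ('v, 'e) point \<Rightarrow> real" where
  "reff G x y = jv G y x x"

end

theory Submission
  imports Defs "Jordan_Normal_Form.Determinant"
begin

lemma lin_sum:
  fixes R :: "('a \<Rightarrow> real) \<Rightarrow> ('a \<Rightarrow> real)"
  assumes lin: "\<And>x y c d. R (\<lambda>v. c * x v + d * y v) w = c * R x w + d * R y w"
  and fin: "finite J"
  shows "R (\<lambda>v. \<Sum>j\<in>J. c j * g j v) w = (\<Sum>j\<in>J. c j * R (g j) w)"
  using fin
proof (induction J rule: finite_induct)
  case empty
  have "R (\<lambda>v. 0 * g undefined v + 0 * g undefined v) w = 0" using lin[of 0 "g undefined" 0 "g undefined"] by simp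
  then show ?case by simp
next
  case (insert a F)
  have "R (\<lambda>v. \<Sum>j\<in>insert a F. c j * g j v) w = R (\<lambda>v. c a * g a v + 1 * (\<Sum>j\<in>F. c j * g j v)) w"
    using insert by simp
  also have "\<dots> = c a * R (g a) w + 1 * R (\<lambda>v. \<Sum>j\<in>F. c j * g j v) w" by (rule lin)
  finally show ?case using insert by simp
qed

lemma fin_inj_surj:
  fixes R :: "('a \<Rightarrow> real) \<Rightarrow> ('a \<Rightarrow> real)"
  assumes fin: "finite Q"
  and lin: "\<And>x y c d w. w \<in> Q \<Longrightarrow> R (\<lambda>v. c * x v + d * y v) w = c * R x w + d * R y w"
  and inj: "\<And>x. (\<forall>w\<in>Q. R x w = 0) \<Longrightarrow> (\<forall>w\<in>Q. x w = 0)"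
  shows "\<exists>x. \<forall>w\<in>Q. R x w = b w"
proof -
  define n where "n = card Q"
  obtain \<iota> where bij: "bij_betw \<iota> {0..<n} Q" using ex_bij_betw_nat_finite[OF fin] n_def by blast
  define \<delta> where "\<delta> j = (\<lambda>w. if w = \<iota> j then 1 else (0::real))" for j
  define X where "X v = (\<lambda>w. \<Sum>j<n. v $ j * \<delta> j w)" for v :: "real vec"
  define M where "M = mat n n (\<lambda>(i,j). R (\<delta> j) (\<iota> i))"
  have M: "M \<in> carrier_mat n n" unfolding M_def by simp
  have \<iota>Q: "i < n \<Longrightarrow> \<iota> i \<in> Q" for i using bij unfolding bij_betw_def by auto
  have \<iota>inj: "i < n \<Longrightarrow> j < n \<Longrightarrow> \<iota> i = \<iota> j \<Longrightarrow> i = j" for i j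
    using bij unfolding bij_betw_def inj_on_def by auto
  have RX: "R (X v) (\<iota> i) = (M *\<^sub>v v) $ i" if "v \<in> carrier_vec n" "i < n" for v i
  proof -
    have "R (X v) (\<iota> i) = (\<Sum>j<n. v $ j * R (\<delta> j) (\<iota> i))"
      unfolding X_def by (rule lin_sum) (auto intro: lin \<iota>Q that)
    also have "\<dots> = (M *\<^sub>v v) $ i"
      using that M unfolding M_def by (auto simp: scalar_prod_def lessThan_atLeast0 mult.commute intro!: sum.cong)
    finally show ?thesis .
  qed
  have Xi: "X v (\<iota> i) = v $ i" if "i < n" for v i
  proof -
    have "X v (\<iota> i) = (\<Sum>j\<in>{i}. v $ j * \<delta> j (\<iota> i))"
      unfolding X_def
      by (rule sum.mono_neutral_right) (use that \<iota>inj in \<open>auto simp: \<delta>_def\<close>)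
    then show ?thesis by (simp add: \<delta>_def)
  qed
  have "det M \<noteq> 0"
  proof
    assume "det M = 0"
    then obtain v where v: "v \<in> carrier_vec n" "v \<noteq> 0\<^sub>v n" "M *\<^sub>v v = 0\<^sub>v n"
      using det_0_iff_vec_prod_zero_field[OF M] by blast
    have "\<forall>w\<in>Q. R (X v) w = 0"
    proof
      fix w assume "w \<in> Q"
      then obtain i where "i < n" "w = \<iota> i" using bij unfolding bij_betw_def by auto
      then show "R (X v) w = 0" using RX[OF v(1)] v(3) by auto
    qed
    then have "\<forall>w\<in>Q. X v w = 0" by (rule inj)
    then have "v = 0\<^sub>v n" using v(1) Xi \<iota>Q by (auto intro!: eq_vecI) (metis Xi \<iota>Q)
    then show False using v(2) by simp
  qed
  from det_non_zero_imp_unit[OF M this, of "()"]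
  obtain B where B: "B \<in> carrier_mat n n" "M * B = 1\<^sub>m n"
    unfolding Units_def ring_mat_def by auto
  define bv where "bv = vec n (\<lambda>i. b (\<iota> i))"
  have bv: "bv \<in> carrier_vec n" unfolding bv_def by simp
  have "M *\<^sub>v (B *\<^sub>v bv) = bv"
    using assoc_mult_mat_vec[OF M B(1) bv, symmetric] B(2) bv by simp
  show ?thesis
  proof (intro exI ballI)
    fix w assume "w \<in> Q"
    then obtain i where i: "i < n" "w = \<iota> i" using bij unfolding bij_betw_def by auto
    have "R (X (B *\<^sub>v bv)) w = (M *\<^sub>v (B *\<^sub>v bv)) $ i"
      using RX[of "B *\<^sub>v bv" i] i B(1) bv by auto
    also have "\<dots> = b w" using \<open>M *\<^sub>v (B *\<^sub>v bv) = bv\<close> i unfolding bv_def by simp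
    finally show "R (X (B *\<^sub>v bv)) w = b w" .
  qed
qed

locale qg =
  fixes G :: "('v, 'e) mgraph" and Q :: "('v, 'e) point set"
  assumes mg: "metrized_graph G" and finQ: "finite Q" and QP: "Q \<subseteq> points G"
    and VQ: "Vert ` verts G \<subseteq> Q"
begin

definition S :: "'e \<Rightarrow> real set" where
  "S e = {0, len G e} \<union> {x. 0 < x \<and> x < len G e \<and> Inner e x \<in> Q}"
definition nxt :: "'e \<Rightarrow> real \<Rightarrow> real" where "nxt e a = Min {y \<in> S e. a < y}"
definition prv :: "'e \<Rightarrow> real \<Rightarrow> real" where "prv e b = Max {y \<in> S e. y < b}"
definition val :: "(('v, 'e) point \<Rightarrow> real) \<Rightarrow> 'e \<Rightarrow> real \<Rightarrow> real" where
  "val f e a = f (pt G e a)"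
definition sl :: "(('v, 'e) point \<Rightarrow> real) \<Rightarrow> 'e \<Rightarrow> real \<Rightarrow> real \<Rightarrow> real" where
  "sl f e a b = (val f e b - val f e a) / (b - a)"
definition En :: "(('v, 'e) point \<Rightarrow> real) \<Rightarrow> (('v, 'e) point \<Rightarrow> real) \<Rightarrow> real" where
  "En f h = (\<Sum>e\<in>edges G. \<Sum>a\<in>S e - {len G e}. sl f e a (nxt e a) * (val h e (nxt e a) - val h e a))"
definition DO :: "(('v, 'e) point \<Rightarrow> real) \<Rightarrow> ('v, 'e) point \<Rightarrow> real" where
  "DO f w = (case w of Vert v \<Rightarrow>
       (\<Sum>e\<in>{e\<in>edges G. src G e = v}. sl f e 0 (nxt e 0))
     - (\<Sum>e\<in>{e\<in>edges G. tgt G e = v}. sl f e (prv e (len G e)) (len G e))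
    | Inner e t \<Rightarrow> sl f e t (nxt e t) - sl f e (prv e t) t)"

lemma finV: "finite (verts G)" and finE: "finite (edges G)"
  and edge_ok: "e \<in> edges G \<Longrightarrow> src G e \<in> verts G \<and> tgt G e \<in> verts G \<and> len G e > 0"
  and conn: "v \<in> verts G \<Longrightarrow> w \<in> verts G \<Longrightarrow> (v, w) \<in> (adj G)\<^sup>*"
  using mg unfolding metrized_graph_def by auto

lemma finS: "finite (S e)"
proof -
  have "S e \<subseteq> {0, len G e} \<union> (\<lambda>w. case w of Inner _ x \<Rightarrow> x | Vert _ \<Rightarrow> 0) ` Q"
    unfolding S_def by (auto intro!: image_eqI)
  then show ?thesis by (rule finite_subset) (use finQ in auto)
qed

lemma S0: "0 \<in> S e" and Slen: "len G e \<in> S e" unfolding S_def by auto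

lemma S_range: "e \<in> edges G \<Longrightarrow> x \<in> S e \<Longrightarrow> 0 \<le> x \<and> x \<le> len G e"
  using edge_ok[of e] unfolding S_def by auto

lemma S_inner: "x \<in> S e \<Longrightarrow> 0 < x \<Longrightarrow> x < len G e \<Longrightarrow> Inner e x \<in> Q"
  unfolding S_def by auto

lemma pt_Q: assumes "e \<in> edges G" "x \<in> S e" shows "pt G e x \<in> Q"
  using assms S_range[OF assms] edge_ok[OF assms(1)] VQ S_inner[of x e]
  unfolding pt_def by auto

lemma nxt: assumes "e \<in> edges G" "a \<in> S e" "a < len G e"
  shows "nxt e a \<in> S e" "a < nxt e a" "\<And>y. y \<in> S e \<Longrightarrow> a < y \<Longrightarrow> nxt e a \<le> y"
proof -
  have ne: "{y \<in> S e. a < y} \<noteq> {}" using Slen assms by auto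
  have fin: "finite {y \<in> S e. a < y}" using finS by auto
  show "nxt e a \<in> S e" "a < nxt e a" using Min_in[OF fin ne] unfolding nxt_def by auto
  show "\<And>y. y \<in> S e \<Longrightarrow> a < y \<Longrightarrow> nxt e a \<le> y" using Min_le[OF fin] unfolding nxt_def by auto
qed

lemma prv: assumes "e \<in> edges G" "b \<in> S e" "0 < b"
  shows "prv e b \<in> S e" "prv e b < b" "\<And>y. y \<in> S e \<Longrightarrow> y < b \<Longrightarrow> y \<le> prv e b"
proof -
  have ne: "{y \<in> S e. y < b} \<noteq> {}" using S0 assms by auto
  have fin: "finite {y \<in> S e. y < b}" using finS by auto
  show "prv e b \<in> S e" "prv e b < b" using Max_in[OF fin ne] unfolding prv_def by auto
  show "\<And>y. y \<in> S e \<Longrightarrow> y < b \<Longrightarrow> y \<le> prv e b" using Max_ge[OF fin] unfolding prv_def by auto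
qed

lemma prv_nxt: assumes "e \<in> edges G" "a \<in> S e" "a < len G e"
  shows "prv e (nxt e a) = a"
proof -
  note n = nxt[OF assms]
  have "0 < nxt e a" using n(2) S_range[OF assms(1,2)] by auto
  note p = prv[OF assms(1) n(1) this]
  have "a \<le> prv e (nxt e a)" using p(3)[OF assms(2) n(2)] .
  moreover have "prv e (nxt e a) \<le> a"
  proof (rule ccontr)
    assume "\<not> ?thesis"
    then have "nxt e a \<le> prv e (nxt e a)" using n(3)[OF p(1)] by auto
    then show False using p(2) by auto
  qed
  ultimately show ?thesis by auto
qed

lemma nxt_prv: assumes "e \<in> edges G" "b \<in> S e" "0 < b"
  shows "nxt e (prv e b) = b"
proof -
  note p = prv[OF assms]
  have "prv e b < len G e" using p(2) S_range[OF assms(1,2)] by auto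
  note n = nxt[OF assms(1) p(1) this]
  have "nxt e (prv e b) \<le> b" using n(3)[OF assms(2) p(2)] .
  moreover have "b \<le> nxt e (prv e b)"
  proof (rule ccontr)
    assume "\<not> ?thesis"
    then have "nxt e (prv e b) \<le> prv e b" using p(3)[OF n(1)] by auto
    then show False using n(2) by auto
  qed
  ultimately show ?thesis by auto
qed

lemma val0: "val f e 0 = f (Vert (src G e))" unfolding val_def pt_def by simp
lemma vallen: "e \<in> edges G \<Longrightarrow> val f e (len G e) = f (Vert (tgt G e))"
  using edge_ok[of e] unfolding val_def pt_def by simp
lemma valin: "0 < x \<Longrightarrow> x < len G e \<Longrightarrow> val f e x = f (Inner e x)"
  unfolding val_def pt_def by simp

end

context qg begin

lemma edge_green:
  assumes e: "e \<in> edges G"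
  shows "(\<Sum>a\<in>S e - {len G e}. sl f e a (nxt e a) * (val h e (nxt e a) - val h e a))
    = val h e (len G e) * sl f e (prv e (len G e)) (len G e) - val h e 0 * sl f e 0 (nxt e 0)
      - (\<Sum>x\<in>S e - {0, len G e}. val h e x * (sl f e x (nxt e x) - sl f e (prv e x) x))"
proof -
  have lp: "0 < len G e" using edge_ok[OF e] by auto
  have r1: "(\<Sum>a\<in>S e - {len G e}. sl f e a (nxt e a) * val h e (nxt e a))
        = (\<Sum>b\<in>S e - {0}. sl f e (prv e b) b * val h e b)"
  proof (rule sum.reindex_bij_witness[of _ "prv e" "nxt e"])
    fix b assume b: "b \<in> S e - {0}"
    then have b0: "0 < b" using S_range[OF e] by force
    show "prv e b \<in> S e - {len G e}" using prv[OF e _ b0] b S_range[OF e, of b] by force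
    show "nxt e (prv e b) = b" using nxt_prv[OF e _ b0] b by auto
  next
    fix a assume a: "a \<in> S e - {len G e}"
    then have al: "a < len G e" using S_range[OF e] by force
    show "prv e (nxt e a) = a" using prv_nxt[OF e _ al] a by auto
    show "nxt e a \<in> S e - {0}" using nxt[OF e _ al] a S_range[OF e, of a] by force
    show "sl f e (prv e (nxt e a)) (nxt e a) * val h e (nxt e a) = sl f e a (nxt e a) * val h e (nxt e a)"
      using prv_nxt[OF e _ al] a by auto
  qed
  have s1: "S e - {0} = insert (len G e) (S e - {0, len G e})" using Slen lp by auto
  have s2: "S e - {len G e} = insert 0 (S e - {0, len G e})" using S0 lp by auto
  have "(\<Sum>a\<in>S e - {len G e}. sl f e a (nxt e a) * (val h e (nxt e a) - val h e a))
     = (\<Sum>a\<in>S e - {len G e}. sl f e a (nxt e a) * val h e (nxt e a))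
       - (\<Sum>a\<in>S e - {len G e}. sl f e a (nxt e a) * val h e a)"
    by (simp add: right_diff_distrib sum_subtractf)
  also have "\<dots> = (\<Sum>b\<in>S e - {0}. sl f e (prv e b) b * val h e b)
       - (\<Sum>a\<in>S e - {len G e}. sl f e a (nxt e a) * val h e a)" using r1 by simp
  also have "\<dots> = (sl f e (prv e (len G e)) (len G e) * val h e (len G e)
         + (\<Sum>b\<in>S e - {0, len G e}. sl f e (prv e b) b * val h e b))
       - (sl f e 0 (nxt e 0) * val h e 0 + (\<Sum>a\<in>S e - {0, len G e}. sl f e a (nxt e a) * val h e a))"
    unfolding s1 s2 using finS by (subst sum.insert, auto)+
  also have "\<dots> = val h e (len G e) * sl f e (prv e (len G e)) (len G e) - val h e 0 * sl f e 0 (nxt e 0)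
      - (\<Sum>x\<in>S e - {0, len G e}. val h e x * (sl f e x (nxt e x) - sl f e (prv e x) x))"
    by (simp add: right_diff_distrib sum_subtractf algebra_simps)
  finally show ?thesis .
qed


lemma Q_inner: "Q - Vert ` verts G = (\<lambda>(e,x). Inner e x) ` (SIGMA e:edges G. S e - {0, len G e})"
proof (rule Set.set_eqI, rule iffI)
  fix w assume w: "w \<in> Q - Vert ` verts G"
  then have "w \<in> points G" using QP by auto
  then obtain e x where "w = Inner e x" "e \<in> edges G" "0 < x" "x < len G e"
    using w unfolding points_def by auto
  then show "w \<in> (\<lambda>(e,x). Inner e x) ` (SIGMA e:edges G. S e - {0, len G e})"
    using w unfolding S_def by (auto intro!: image_eqI[where x="(e,x)"])
next
  fix w :: "('v,'e) point" assume "w \<in> (\<lambda>(e,x). Inner e x) ` (SIGMA e:edges G. S e - {0, len G e})"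
  then obtain e x where "w = Inner e x" "e \<in> edges G" "x \<in> S e" "x \<noteq> 0" "x \<noteq> len G e" by auto
  moreover then have "Inner e x \<in> Q" using S_inner S_range by force
  ultimately show "w \<in> Q - Vert ` verts G" by auto
qed

lemma green: "En f h = - (\<Sum>w\<in>Q. h w * DO f w)"
proof -
  define F where "F e = sl f e 0 (nxt e 0)" for e
  define Lr where "Lr e = sl f e (prv e (len G e)) (len G e)" for e
  define I where "I e x = sl f e x (nxt e x) - sl f e (prv e x) x" for e x
  have "En f h = (\<Sum>e\<in>edges G. h (Vert (tgt G e)) * Lr e - h (Vert (src G e)) * F e
      - (\<Sum>x\<in>S e - {0, len G e}. h (Inner e x) * I e x))"
    unfolding En_def
  proof (rule sum.cong[OF refl])
    fix e assume e: "e \<in> edges G"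
    have "(\<Sum>x\<in>S e - {0, len G e}. val h e x * (sl f e x (nxt e x) - sl f e (prv e x) x))
       = (\<Sum>x\<in>S e - {0, len G e}. h (Inner e x) * I e x)"
      unfolding I_def
    proof (intro sum.cong refl)
      fix x assume "x \<in> S e - {0, len G e}"
      then have "0 < x" "x < len G e" using S_range[OF e, of x] by auto
      then show "val h e x * (sl f e x (nxt e x) - sl f e (prv e x) x) =
         h (Inner e x) * (sl f e x (nxt e x) - sl f e (prv e x) x)" by (simp add: valin)
    qed
    then show "(\<Sum>a\<in>S e - {len G e}. sl f e a (nxt e a) * (val h e (nxt e a) - val h e a)) =
      h (Vert (tgt G e)) * Lr e - h (Vert (src G e)) * F e - (\<Sum>x\<in>S e - {0, len G e}. h (Inner e x) * I e x)"
      unfolding edge_green[OF e] F_def Lr_def by (simp add: val0 vallen[OF e])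
  qed
  also have "\<dots> = (\<Sum>e\<in>edges G. h (Vert (tgt G e)) * Lr e) - (\<Sum>e\<in>edges G. h (Vert (src G e)) * F e)
      - (\<Sum>e\<in>edges G. \<Sum>x\<in>S e - {0, len G e}. h (Inner e x) * I e x)"
    by (simp add: sum_subtractf)
  finally have E: "En f h = \<dots>" .
  have finQi: "finite (SIGMA e:edges G. S e - {0, len G e})" using finE finS by auto
  have injI: "inj_on (\<lambda>(e,x). Inner e x) (SIGMA e:edges G. S e - {0, len G e})"
    by (auto simp: inj_on_def)
  have "(\<Sum>w\<in>Q. h w * DO f w) = (\<Sum>w\<in>Vert ` verts G. h w * DO f w) + (\<Sum>w\<in>Q - Vert ` verts G. h w * DO f w)"
    using sum.subset_diff[OF VQ finQ, of "\<lambda>w. h w * DO f w"] by simp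
  also have "(\<Sum>w\<in>Q - Vert ` verts G. h w * DO f w) = (\<Sum>e\<in>edges G. \<Sum>x\<in>S e - {0, len G e}. h (Inner e x) * I e x)"
  proof -
    have "(\<Sum>w\<in>Q - Vert ` verts G. h w * DO f w) = (\<Sum>(e,x)\<in>(SIGMA e:edges G. S e - {0, len G e}). h (Inner e x) * I e x)"
      unfolding Q_inner sum.reindex[OF injI] by (intro sum.cong refl) (auto simp: DO_def I_def)
    also have "\<dots> = (\<Sum>e\<in>edges G. \<Sum>x\<in>S e - {0, len G e}. h (Inner e x) * I e x)"
      using finE finS by (subst sum.Sigma) auto
    finally show ?thesis .
  qed
  also have "(\<Sum>w\<in>Vert ` verts G. h w * DO f w) = (\<Sum>v\<in>verts G. h (Vert v) *
      ((\<Sum>e\<in>{e\<in>edges G. src G e = v}. F e) - (\<Sum>e\<in>{e\<in>edges G. tgt G e = v}. Lr e)))"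
    by (subst sum.reindex) (auto simp: inj_on_def DO_def F_def Lr_def)
  also have "\<dots> = (\<Sum>e\<in>edges G. h (Vert (src G e)) * F e) - (\<Sum>e\<in>edges G. h (Vert (tgt G e)) * Lr e)"
  proof -
    have grp: "(\<Sum>v\<in>verts G. h (Vert v) * (\<Sum>e\<in>{e\<in>edges G. g e = v}. H e)) = (\<Sum>e\<in>edges G. h (Vert (g e)) * H e)"
      if g: "\<And>e. e \<in> edges G \<Longrightarrow> g e \<in> verts G" for g H
    proof -
      have "(\<Sum>v\<in>verts G. h (Vert v) * (\<Sum>e\<in>{e\<in>edges G. g e = v}. H e))
          = (\<Sum>v\<in>verts G. \<Sum>e\<in>{e\<in>edges G. g e = v}. h (Vert (g e)) * H e)"
        by (simp add: sum_distrib_left)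
      also have "\<dots> = (\<Sum>e\<in>edges G. h (Vert (g e)) * H e)"
        by (rule sum.group) (use finE finV g in auto)
      finally show ?thesis .
    qed
    show ?thesis unfolding right_diff_distrib sum_subtractf
      using grp[of "src G" F] grp[of "tgt G" Lr] edge_ok by simp
  qed
  finally show ?thesis using E by simp
qed

lemma En_sym: "En f h = En h f"
  unfolding En_def sl_def by (intro sum.cong refl) (simp add: field_simps)

lemma sl_lin: "sl (\<lambda>v. c * x v + d * y v) e a b = c * sl x e a b + d * sl y e a b"
  by (simp add: sl_def val_def algebra_simps add_divide_distrib diff_divide_distrib)

lemma DO_lin: "DO (\<lambda>v. c * x v + d * y v) w = c * DO x w + d * DO y w"
  unfolding DO_def sl_lin by (cases w) (simp_all add: sum.distrib sum_distrib_left algebra_simps sum_subtractf)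

end

context qg begin

lemma En_one: "En f (\<lambda>_. 1) = 0" unfolding En_def val_def by simp

lemma DO_sum_zero: "(\<Sum>w\<in>Q. DO f w) = 0"
  using green[of f "\<lambda>_. 1"] En_one[of f] by simp

lemma En_self_zero:
  assumes E0: "En f f = 0" and w: "w \<in> Q" and w': "w' \<in> Q"
  shows "f w = f w'"
proof -
  have termz: "val f e (nxt e a) = val f e a" if e: "e \<in> edges G" and a: "a \<in> S e - {len G e}" for e a
  proof -
    define T where "T e a = sl f e a (nxt e a) * (val f e (nxt e a) - val f e a)" for e a
    have Tnn: "T e a \<ge> 0" if e: "e \<in> edges G" and a: "a \<in> S e - {len G e}" for e a
    proof -
      have "a < nxt e a" using nxt(2)[OF e] a S_range[OF e, of a] by force
      moreover have "T e a = (val f e (nxt e a) - val f e a)\<^sup>2 / (nxt e a - a)"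
        unfolding T_def sl_def by (simp add: power2_eq_square)
      ultimately show ?thesis by simp
    qed
    have "(\<Sum>e\<in>edges G. \<Sum>a\<in>S e - {len G e}. T e a) = 0" using E0 unfolding En_def T_def .
    moreover have "\<And>e. e \<in> edges G \<Longrightarrow> 0 \<le> (\<Sum>a\<in>S e - {len G e}. T e a)"
      by (rule sum_nonneg) (rule Tnn)
    ultimately have "\<forall>e\<in>edges G. (\<Sum>a\<in>S e - {len G e}. T e a) = 0"
      by (rule iffD1[OF sum_nonneg_eq_0_iff[OF finE], rotated])
    then have "(\<Sum>a\<in>S e - {len G e}. T e a) = 0" using e by blast
    moreover have "finite (S e - {len G e})" using finS by auto
    moreover have "\<And>a. a \<in> S e - {len G e} \<Longrightarrow> 0 \<le> T e a" using Tnn[OF e] .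
    ultimately have "\<forall>a\<in>S e - {len G e}. T e a = 0"
      by (intro iffD1[OF sum_nonneg_eq_0_iff]) 
    then have "T e a = 0" using a by blast
    moreover have "a < nxt e a" using nxt(2)[OF e] a S_range[OF e, of a] by force
    ultimately show ?thesis unfolding T_def sl_def by simp
  qed
  have edge_const: "val f e a = val f e 0" if e: "e \<in> edges G" and a: "a \<in> S e" for e a
  proof (rule ccontr)
    assume bad: "val f e a \<noteq> val f e 0"
    define B where "B = {b \<in> S e. val f e b \<noteq> val f e 0}"
    have finB: "finite B" using finS unfolding B_def by auto
    have "a \<in> B" using a bad unfolding B_def by auto
    then have neB: "B \<noteq> {}" by auto
    define m where "m = Min B"
    have mB: "m \<in> B" using Min_in[OF finB neB] m_def by auto
    have mmin: "\<And>b. b \<in> B \<Longrightarrow> m \<le> b" using Min_le[OF finB] m_def by auto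
    have mS: "m \<in> S e" and mv: "val f e m \<noteq> val f e 0" using mB unfolding B_def by auto
    have m0: "0 < m" using mv S_range[OF e mS] by (cases "m = 0") auto
    note pp = prv[OF e mS m0]
    have "prv e m \<notin> B" using mmin pp(2) by force
    then have v1: "val f e (prv e m) = val f e 0" using pp(1) unfolding B_def by auto
    have "prv e m \<in> S e - {len G e}" using pp(1,2) S_range[OF e mS] by auto
    from termz[OF e this] have "val f e m = val f e (prv e m)" using nxt_prv[OF e mS m0] by simp
    then show False using v1 mv by simp
  qed
  have ends: "f (Vert (src G e)) = f (Vert (tgt G e))" if e: "e \<in> edges G" for e
    using edge_const[OF e Slen] vallen[OF e] val0 by simp
  have vc: "f (Vert v) = f (Vert v')" if "(v, v') \<in> (adj G)\<^sup>*" for v v'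
    using that
  proof (induction rule: rtrancl_induct)
    case base then show ?case by simp
  next
    case (step b c)
    from step(2) obtain e where "e \<in> edges G" "(b = src G e \<and> c = tgt G e) \<or> (b = tgt G e \<and> c = src G e)"
      unfolding adj_def by auto
    then have "f (Vert b) = f (Vert c)" using ends by auto
    then show ?case using step(3) by simp
  qed
  have tov: "\<exists>v\<in>verts G. f x = f (Vert v)" if x: "x \<in> Q" for x
  proof -
    have "x \<in> points G" using x QP by auto
    then consider v where "x = Vert v" "v \<in> verts G"
      | e r where "x = Inner e r" "e \<in> edges G" "0 < r" "r < len G e"
      unfolding points_def by auto
    then show ?thesis
    proof cases
      case 1 then show ?thesis by auto
    next
      case 2
      then have "r \<in> S e" using x unfolding S_def by auto
      from edge_const[OF 2(2) this] have "f x = f (Vert (src G e))" using 2 valin val0 by simp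
      then show ?thesis using edge_ok[OF 2(2)] by auto
    qed
  qed
  obtain v where v: "v \<in> verts G" "f w = f (Vert v)" using tov[OF w] by auto
  obtain v' where v': "v' \<in> verts G" "f w' = f (Vert v')" using tov[OF w'] by auto
  show ?thesis using v v' vc[OF conn[OF v(1) v'(1)]] by simp
qed

definition ind :: "bool \<Rightarrow> real" where "ind b = (if b then 1 else 0)"

definition dpot where
  "dpot a1 a2 y z x \<longleftrightarrow>
     (\<forall>w\<in>Q - {a1, a2}. DO x w = ind (w = z) - ind (w = y)) \<and> x a1 = x a2 \<and>
     (\<Sum>w\<in>{a1, a2}. DO x w) = ind (z \<in> {a1, a2}) - ind (y \<in> {a1, a2})"

lemma sum_ind: "y \<in> Q \<Longrightarrow> (\<Sum>w\<in>Q. h w * ind (w = y)) = h y"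
  using finQ by (simp add: ind_def sum.delta' if_distrib cong: if_cong)

lemma kirch_sum:
  assumes d: "dpot a1 a2 y z f" and Q: "y \<in> Q" "z \<in> Q" "a1 \<in> Q" "a2 \<in> Q"
  shows "(\<Sum>w\<in>Q. h w * DO f w) = h z - h y + (DO f a1 - ind (a1 = z) + ind (a1 = y)) * (h a1 - h a2)"
proof -
  define \<beta> where "\<beta> w = ind (w = z) - ind (w = y)" for w
  have A: "{a1, a2} \<subseteq> Q" using Q by auto
  have "(\<Sum>w\<in>Q. h w * DO f w) = (\<Sum>w\<in>Q. h w * \<beta> w) + (\<Sum>w\<in>Q. h w * (DO f w - \<beta> w))"
    by (simp add: sum.distrib[symmetric] algebra_simps)
  also have "(\<Sum>w\<in>Q. h w * \<beta> w) = h z - h y"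
    unfolding \<beta>_def right_diff_distrib sum_subtractf using sum_ind Q by simp
  also have "(\<Sum>w\<in>Q. h w * (DO f w - \<beta> w)) = (\<Sum>w\<in>{a1,a2}. h w * (DO f w - \<beta> w))"
    using d finQ A unfolding dpot_def \<beta>_def by (intro sum.mono_neutral_right) auto
  also have "\<dots> = (DO f a1 - ind (a1 = z) + ind (a1 = y)) * (h a1 - h a2)"
  proof (cases "a1 = a2")
    case True
    then show ?thesis using d unfolding dpot_def \<beta>_def ind_def by auto
  next
    case False
    have "DO f a1 + DO f a2 = ind (z \<in> {a1, a2}) - ind (y \<in> {a1, a2})"
      using d False unfolding dpot_def by (simp add: sum.insert)
    moreover have "ind (z \<in> {a1, a2}) = ind (a1 = z) + ind (a2 = z)"
      "ind (y \<in> {a1, a2}) = ind (a1 = y) + ind (a2 = y)" using False unfolding ind_def by auto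
    ultimately have D2: "DO f a2 = ind (a1 = z) + ind (a2 = z) - ind (a1 = y) - ind (a2 = y) - DO f a1"
      by linarith
    have "(\<Sum>w\<in>{a1,a2}. h w * (DO f w - \<beta> w)) = h a1 * (DO f a1 - \<beta> a1) + h a2 * (DO f a2 - \<beta> a2)"
      using False by simp
    also have "\<dots> = (DO f a1 - ind (a1 = z) + ind (a1 = y)) * (h a1 - h a2)"
      unfolding \<beta>_def D2 by (simp add: algebra_simps)
    finally show ?thesis .
  qed
  finally show ?thesis .
qed

lemma En_dpot:
  assumes d: "dpot a1 a2 y z f" and Q: "y \<in> Q" "z \<in> Q" "a1 \<in> Q" "a2 \<in> Q"
  shows "En f h = h y - h z - (DO f a1 - ind (a1 = z) + ind (a1 = y)) * (h a1 - h a2)"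
  using green[of f h] kirch_sum[OF d Q, of h] by simp

lemma dpot_unique:
  assumes d1: "dpot a1 a2 y z f1" and d2: "dpot a1 a2 y z f2" and Q: "y \<in> Q" "z \<in> Q" "a1 \<in> Q" "a2 \<in> Q"
    and z: "f1 z = f2 z" and w: "w \<in> Q"
  shows "f1 w = f2 w"
proof -
  define d where "d v = f1 v - f2 v" for v
  have da: "d a1 = d a2" using d1 d2 unfolding dpot_def d_def by simp
  have sld: "sl d e a b = sl f1 e a b - sl f2 e a b" for e a b
    using sl_lin[of 1 f1 "-1" f2] unfolding d_def by simp
  have "En d d = En f1 d - En f2 d" unfolding En_def
    unfolding sld left_diff_distrib by (simp only: sum_subtractf)
  also have "\<dots> = 0" using En_dpot[OF d1 Q, of d] En_dpot[OF d2 Q, of d] da by simp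
  finally have "d w = d z" using En_self_zero w Q(2) by blast
  then show ?thesis using z unfolding d_def by simp
qed

end

context qg begin

lemma dpot_exists:
  assumes Q: "y \<in> Q" "z \<in> Q" "a1 \<in> Q" "a2 \<in> Q"
  shows "\<exists>x. dpot a1 a2 y z x \<and> x z = 0"
proof -
  define R where "R x w = (if w = a2 then x z else if w = a1 then x a1 - x a2 else DO x w)"
    for x :: "('v,'e) point \<Rightarrow> real" and w
  define b where "b w = (if w \<in> {a1, a2} then 0 else ind (w = z) - ind (w = y))" for w
  have lin: "R (\<lambda>v. c * x v + d * x' v) w = c * R x w + d * R x' w" for x x' c d w
    unfolding R_def by (simp add: DO_lin algebra_simps)
  have inj: "\<forall>w\<in>Q. x w = 0" if R0: "\<forall>w\<in>Q. R x w = 0" for x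
  proof -
    have xz: "x z = 0" using R0 Q unfolding R_def by auto
    have xa: "x a1 = x a2" using R0 Q unfolding R_def by (cases "a1 = a2") auto
    have DOQ: "DO x w = 0" if "w \<in> Q - {a1, a2}" for w using R0 that unfolding R_def by auto
    have A: "{a1, a2} \<subseteq> Q" using Q by auto
    have s1: "(\<Sum>w\<in>Q. h w * DO x w) = (\<Sum>w\<in>{a1,a2}. h w * DO x w)" for h
      using finQ A DOQ by (intro sum.mono_neutral_right) auto
    have sA: "(\<Sum>w\<in>{a1,a2}. DO x w) = 0" using s1[of "\<lambda>_. 1"] DO_sum_zero[of x] by simp
    have "(\<Sum>w\<in>{a1,a2}. x w * DO x w) = (\<Sum>w\<in>{a1,a2}. x a1 * DO x w)"
      using xa by (intro sum.cong) auto
    also have "\<dots> = 0" using sA by (simp add: sum_distrib_left[symmetric])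
    finally have "En x x = 0" using green[of x x] s1[of x] by simp
    then show ?thesis using En_self_zero[of x] xz Q(2) by metis
  qed
  have "\<exists>x. \<forall>w\<in>Q. R x w = b w"
    by (rule fin_inj_surj[OF finQ]) (rule lin, erule inj)
  then obtain x where x: "\<forall>w\<in>Q. R x w = b w" by blast
  have xz: "x z = 0" using x Q unfolding R_def b_def by auto
  have xa: "x a1 = x a2" using x Q unfolding R_def b_def by (cases "a1 = a2") auto
  have DOQ: "DO x w = ind (w = z) - ind (w = y)" if "w \<in> Q - {a1, a2}" for w
    using x that unfolding R_def b_def by auto
  have A: "{a1, a2} \<subseteq> Q" using Q by auto
  have "(\<Sum>w\<in>Q. DO x w) = (\<Sum>w\<in>Q - {a1,a2}. DO x w) + (\<Sum>w\<in>{a1,a2}. DO x w)"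
    using sum.subset_diff[OF A finQ] by simp
  moreover have "(\<Sum>w\<in>Q - {a1,a2}. DO x w) = (\<Sum>w\<in>Q - {a1,a2}. ind (w = z) - ind (w = y))"
    using DOQ by (rule sum.cong[OF refl])
  moreover have "(\<Sum>w\<in>Q - {a1,a2}. ind (w = z)) = ind (z \<notin> {a1, a2})"
    using finQ Q by (simp add: ind_def sum.delta')
  moreover have "(\<Sum>w\<in>Q - {a1,a2}. ind (w = y)) = ind (y \<notin> {a1, a2})"
    using finQ Q by (simp add: ind_def sum.delta')
  moreover have "ind (z \<in> {a1, a2}) = 1 - ind (z \<notin> {a1, a2})" "ind (y \<in> {a1, a2}) = 1 - ind (y \<notin> {a1, a2})"
    by (simp_all add: ind_def)
  ultimately have "(\<Sum>w\<in>{a1,a2}. DO x w) = ind (z \<in> {a1, a2}) - ind (y \<in> {a1, a2})"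
    using DO_sum_zero[of x] by (simp add: sum_subtractf)
  then have "dpot a1 a2 y z x" unfolding dpot_def using DOQ xa by auto
  then show ?thesis using xz by auto
qed

end

lemma rslope_aff:
  assumes "c \<le> s" "s < d" "d \<le> len G e" "\<forall>r\<in>{c..d}. f (pt G e r) = \<alpha> + \<beta> * r"
  shows "rslope G f e s = \<beta>"
proof -
  have D: "((\<lambda>r. f (pt G e r)) has_real_derivative \<beta>) (at s within {s..len G e})"
  proof (rule has_field_derivative_transform_within[where d="d - s"])
    show "((\<lambda>r. \<alpha> + \<beta> * r) has_real_derivative \<beta>) (at s within {s..len G e})"
      by (auto intro!: derivative_eq_intros)
    show "0 < d - s" using assms by simp
    show "s \<in> {s..len G e}" using assms by simp
    fix r assume "r \<in> {s..len G e}" "dist r s < d - s"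
    then show "\<alpha> + \<beta> * r = f (pt G e r)" using assms by (auto simp: dist_real_def)
  qed
  have nb: "at s within {s..len G e} \<noteq> bot"
    using assms at_within_Icc_at_right[of s "len G e"] trivial_limit_at_right_real by simp
  show ?thesis unfolding rslope_def
    by (rule the_equality[where P="\<lambda>D. ((\<lambda>r. f (pt G e r)) has_real_derivative D) (at s within {s..len G e})", OF D])
      (rule has_field_derivative_unique[OF _ D nb])
qed

lemma lslope_aff:
  assumes "c < s" "s \<le> d" "0 \<le> c" "\<forall>r\<in>{c..d}. f (pt G e r) = \<alpha> + \<beta> * r"
  shows "lslope G f e s = \<beta>"
proof -
  have D: "((\<lambda>r. f (pt G e r)) has_real_derivative \<beta>) (at s within {0..s})"
  proof (rule has_field_derivative_transform_within[where d="s - c"])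
    show "((\<lambda>r. \<alpha> + \<beta> * r) has_real_derivative \<beta>) (at s within {0..s})"
      by (auto intro!: derivative_eq_intros)
    show "0 < s - c" using assms by simp
    show "s \<in> {0..s}" using assms by simp
    fix r assume "r \<in> {0..s}" "dist r s < s - c"
    then show "\<alpha> + \<beta> * r = f (pt G e r)" using assms by (auto simp: dist_real_def)
  qed
  have nb: "at s within {0..s} \<noteq> bot"
    using assms at_within_Icc_at_left[of 0 s] trivial_limit_at_left_real by simp
  show ?thesis unfolding lslope_def
    by (rule the_equality[where P="\<lambda>D. ((\<lambda>r. f (pt G e r)) has_real_derivative D) (at s within {0..s})", OF D])
      (rule has_field_derivative_unique[OF _ D nb])
qed

lemma pot_cont: "potential G A y z f \<Longrightarrow> \<forall>e\<in>edges G. continuous_on {0..len G e} (\<lambda>s. f (pt G e s))"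
  unfolding potential_def by (rule conjunct1)
lemma pot_lin: "potential G A y z f \<Longrightarrow> (\<forall>e\<in>edges G. \<forall>a b. 0 \<le> a \<and> a \<le> b \<and> b \<le> len G e \<and>
         (\<forall>s. a < s \<and> s < b \<longrightarrow> pt G e s \<notin> {y, z} \<union> A) \<longrightarrow>
         (\<exists>\<alpha> \<beta>. \<forall>s\<in>{a..b}. f (pt G e s) = \<alpha> + \<beta> * s))"
  unfolding potential_def by (rule conjunct1[OF conjunct2])
lemma pot_const: "potential G A y z f \<Longrightarrow> (\<forall>w\<in>A. \<forall>w'\<in>A. f w = f w')"
  unfolding potential_def by (rule conjunct1[OF conjunct2[OF conjunct2]])
lemma pot_kirch: "potential G A y z f \<Longrightarrow> (\<forall>w\<in>points G.
        (\<Sum>w'\<in>cls A w. outslope G f w') =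
          (if z \<in> cls A w then 1 else 0) - (if y \<in> cls A w then 1 else 0))"
  unfolding potential_def by (rule conjunct2[OF conjunct2[OF conjunct2]])

context qg begin

definition qlin :: "(('v, 'e) point \<Rightarrow> real) \<Rightarrow> bool" where
  "qlin f \<longleftrightarrow> (\<forall>e\<in>edges G. \<forall>a\<in>S e - {len G e}. \<exists>\<alpha> \<beta>. \<forall>s\<in>{a..nxt e a}. f (pt G e s) = \<alpha> + \<beta> * s)"

lemma aff_slope:
  assumes "\<forall>s\<in>{a..b}. f (pt G e s) = \<alpha> + \<beta> * s" "a < b"
  shows "\<beta> = sl f e a b"
proof -
  have "f (pt G e a) = \<alpha> + \<beta> * a" "f (pt G e b) = \<alpha> + \<beta> * b" using assms by auto
  then show ?thesis using assms(2) unfolding sl_def val_def by (simp add: field_simps)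
qed

lemma rslope_q:
  assumes f: "qlin f" and e: "e \<in> edges G" and a: "a \<in> S e" "a < len G e"
  shows "rslope G f e a = sl f e a (nxt e a)"
proof -
  note n = nxt[OF e a]
  obtain \<alpha> \<beta> where ab: "\<forall>s\<in>{a..nxt e a}. f (pt G e s) = \<alpha> + \<beta> * s"
    using f e a unfolding qlin_def by force
  have "nxt e a \<le> len G e" using S_range[OF e n(1)] by simp
  then have "rslope G f e a = \<beta>" using rslope_aff[OF _ n(2) _ ab] by simp
  then show ?thesis using aff_slope[OF ab n(2)] by simp
qed

lemma lslope_q:
  assumes f: "qlin f" and e: "e \<in> edges G" and b: "b \<in> S e" "0 < b"
  shows "lslope G f e b = sl f e (prv e b) b"
proof -
  note p = prv[OF e b]
  have pl: "prv e b < len G e" using p(2) S_range[OF e b(1)] by simp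
  have np: "nxt e (prv e b) = b" using nxt_prv[OF e b] .
  obtain \<alpha> \<beta> where ab: "\<forall>s\<in>{prv e b..b}. f (pt G e s) = \<alpha> + \<beta> * s"
    using f e p(1) pl np unfolding qlin_def by force
  have "0 \<le> prv e b" using S_range[OF e p(1)] by simp
  then have "lslope G f e b = \<beta>" using lslope_aff[OF p(2) _ _ ab] by simp
  then show ?thesis using aff_slope[OF ab p(2)] by simp
qed

lemma Q_cases:
  assumes "w \<in> Q"
  obtains (V) v where "w = Vert v" "v \<in> verts G"
    | (I) e t where "w = Inner e t" "e \<in> edges G" "t \<in> S e" "0 < t" "t < len G e"
proof -
  have "w \<in> points G" using assms QP by auto
  then show ?thesis using that assms unfolding points_def S_def by auto
qed

lemma outslope_q:
  assumes f: "qlin f" and w: "w \<in> Q"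
  shows "outslope G f w = DO f w"
  using w
proof (cases rule: Q_cases)
  case (V v)
  have r: "rslope G f e 0 = sl f e 0 (nxt e 0)" if "e \<in> edges G" for e
    using rslope_q[OF f that S0] edge_ok[OF that] by simp
  have l: "lslope G f e (len G e) = sl f e (prv e (len G e)) (len G e)" if "e \<in> edges G" for e
    using lslope_q[OF f that Slen] edge_ok[OF that] by simp
  show ?thesis unfolding V DO_def using r l by (simp add: sum_negf)
next
  case (I e t)
  then show ?thesis unfolding DO_def using rslope_q[OF f I(2,3)] lslope_q[OF f I(2,3)] by simp
qed

lemma pot_qlin:
  assumes P: "potential G A y z f" and sub: "{y, z} \<union> A \<subseteq> Q"
  shows "qlin f"
  unfolding qlin_def
proof (intro ballI)
  fix e a assume e: "e \<in> edges G" and a: "a \<in> S e - {len G e}"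
  have al: "a < len G e" using a S_range[OF e] by force
  note n = nxt[OF e _ al]
  have rng: "0 \<le> a" "a \<le> nxt e a" "nxt e a \<le> len G e"
    using S_range[OF e] a n by force+
  have "\<forall>s. a < s \<and> s < nxt e a \<longrightarrow> pt G e s \<notin> {y, z} \<union> A"
  proof (intro allI impI)
    fix s assume s: "a < s \<and> s < nxt e a"
    then have "pt G e s = Inner e s" using rng unfolding pt_def by auto
    moreover have "Inner e s \<notin> Q"
    proof
      assume "Inner e s \<in> Q"
      then have sS: "s \<in> S e" using s rng unfolding S_def by auto
      have aS: "a \<in> S e" using a by simp
      show False using n(3)[OF aS sS] s by force
    qed
    ultimately show "pt G e s \<notin> {y, z} \<union> A" using sub by auto
  qed
  then show "\<exists>\<alpha> \<beta>. \<forall>s\<in>{a..nxt e a}. f (pt G e s) = \<alpha> + \<beta> * s"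
    using pot_lin[OF P] e rng by blast
qed

lemma pot_dpot2:
  assumes P: "potential G {p, q} y z f" and pq: "p \<noteq> q" and sub: "{y, z, p, q} \<subseteq> Q"
  shows "dpot p q y z f"
proof -
  have ql: "qlin f" using pot_qlin[OF P] sub by auto
  have K: "\<And>w. w \<in> points G \<Longrightarrow> (\<Sum>w'\<in>cls {p, q} w. outslope G f w') =
          (if z \<in> cls {p, q} w then 1 else 0) - (if y \<in> cls {p, q} w then 1 else 0)"
    using pot_kirch[OF P] by blast
  have c1: "\<forall>w\<in>Q - {p, q}. DO f w = ind (w = z) - ind (w = y)"
  proof
    fix w assume w: "w \<in> Q - {p, q}"
    then have "w \<in> points G" using QP by auto
    from K[OF this] w show "DO f w = ind (w = z) - ind (w = y)"
      using outslope_q[OF ql] unfolding cls_def ind_def by auto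
  qed
  have c2: "f p = f q" using pot_const[OF P] by blast
  have "p \<in> points G" using sub QP by auto
  from K[OF this] have "(\<Sum>w\<in>{p, q}. outslope G f w) = ind (z \<in> {p, q}) - ind (y \<in> {p, q})"
    unfolding cls_def ind_def by simp
  moreover have "(\<Sum>w\<in>{p, q}. outslope G f w) = (\<Sum>w\<in>{p, q}. DO f w)"
    using outslope_q[OF ql] sub by (intro sum.cong) auto
  ultimately show ?thesis using c1 c2 unfolding dpot_def by simp
qed

lemma pot_dpot0:
  assumes P: "potential G {} y z f" and sub: "{y, z} \<subseteq> Q"
  shows "dpot z z y z f"
proof -
  have ql: "qlin f" using pot_qlin[OF P] sub by auto
  have K: "\<And>w. w \<in> points G \<Longrightarrow> (\<Sum>w'\<in>cls {} w. outslope G f w') =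
          (if z \<in> cls {} w then 1 else 0) - (if y \<in> cls {} w then 1 else 0)"
    using pot_kirch[OF P] by blast
  have c1: "\<forall>w\<in>Q - {z, z}. DO f w = ind (w = z) - ind (w = y)"
  proof
    fix w assume w: "w \<in> Q - {z, z}"
    then have "w \<in> points G" using QP by auto
    from K[OF this] w show "DO f w = ind (w = z) - ind (w = y)"
      using outslope_q[OF ql] unfolding cls_def ind_def by auto
  qed
  have "z \<in> points G" using sub QP by auto
  from K[OF this] have "outslope G f z = ind (z \<in> {z, z}) - ind (y \<in> {z, z})"
    unfolding cls_def ind_def by auto
  then have "(\<Sum>w\<in>{z, z}. DO f w) = ind (z \<in> {z, z}) - ind (y \<in> {z, z})"
    using outslope_q[OF ql] sub by simp
  then show ?thesis using c1 unfolding dpot_def by simp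
qed

end

context qg begin

definition g :: "(('v, 'e) point \<Rightarrow> real) \<Rightarrow> 'e \<Rightarrow> real \<Rightarrow> real" where
  "g x e s = x (Vert (src G e)) + (\<Sum>a\<in>S e - {len G e}. sl x e a (nxt e a) * (max a (min s (nxt e a)) - a))"

definition ip :: "(('v, 'e) point \<Rightarrow> real) \<Rightarrow> ('v, 'e) point \<Rightarrow> real" where
  "ip x w = (case w of Vert v \<Rightarrow> x (Vert v) | Inner e s \<Rightarrow> g x e s)"

lemma seg_max:
  assumes e: "e \<in> edges G" and s: "0 \<le> s" "s < len G e"
  defines "c \<equiv> Max {a \<in> S e. a \<le> s}"
  shows "c \<in> S e" "c \<le> s" "c < len G e" "s < nxt e c"
proof -
  have fin: "finite {a \<in> S e. a \<le> s}" using finS by auto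
  have ne: "{a \<in> S e. a \<le> s} \<noteq> {}" using S0 s by auto
  show cS: "c \<in> S e" and cs: "c \<le> s" using Max_in[OF fin ne] unfolding c_def by auto
  show cl: "c < len G e" using cs s by simp
  show "s < nxt e c"
  proof (rule ccontr)
    assume "\<not> s < nxt e c"
    then have "nxt e c \<in> {a \<in> S e. a \<le> s}" using nxt(1)[OF e cS cl] by auto
    then have "nxt e c \<le> c" using Max_ge[OF fin] unfolding c_def by auto
    then show False using nxt(2)[OF e cS cl] by simp
  qed
qed

lemma seg_exists:
  assumes e: "e \<in> edges G" and s: "0 \<le> s" "s \<le> len G e"
  shows "\<exists>c\<in>S e. c < len G e \<and> c \<le> s \<and> s \<le> nxt e c"
proof (cases "s = len G e")
  case True
  have l0: "0 < len G e" using edge_ok[OF e] by simp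
  note p = prv[OF e Slen l0]
  show ?thesis using p(1,2) nxt_prv[OF e Slen l0] True by (intro bexI[of _ "prv e (len G e)"]) auto
next
  case False
  then show ?thesis using seg_max[OF e s(1)] s by (meson le_less)
qed

lemma tele:
  assumes e: "e \<in> edges G" and c: "c \<in> S e"
  shows "(\<Sum>a\<in>{a\<in>S e. a < c}. val x e (nxt e a) - val x e a) = val x e c - val x e 0"
proof (cases "c = 0")
  case True
  have emp: "{a\<in>S e. a < c} = {}" using S_range[OF e] True by force
  show ?thesis unfolding emp using True by simp
next
  case False
  then have c0: "0 < c" using S_range[OF e c] by simp
  have cl: "c \<le> len G e" using S_range[OF e c] by simp
  have r: "(\<Sum>a\<in>{a\<in>S e. a < c}. val x e (nxt e a)) = (\<Sum>b\<in>{b\<in>S e. 0 < b \<and> b \<le> c}. val x e b)"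
  proof (rule sum.reindex_bij_witness[of _ "prv e" "nxt e"])
    fix a assume a: "a \<in> {a\<in>S e. a < c}"
    then have al: "a < len G e" using cl by auto
    show "prv e (nxt e a) = a" using prv_nxt[OF e _ al] a by auto
    show "nxt e a \<in> {b\<in>S e. 0 < b \<and> b \<le> c}"
      using nxt[OF e _ al] a S_range[OF e, of a] c by force
    show "val x e (nxt e a) = val x e (nxt e a)" by simp
  next
    fix b assume b: "b \<in> {b\<in>S e. 0 < b \<and> b \<le> c}"
    show "nxt e (prv e b) = b" using nxt_prv[OF e] b by auto
    show "prv e b \<in> {a\<in>S e. a < c}" using prv[OF e] b by force
  qed
  have s1: "{b\<in>S e. 0 < b \<and> b \<le> c} = insert c {b\<in>S e. 0 < b \<and> b < c}" using c c0 by auto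
  have s2: "{a\<in>S e. a < c} = insert 0 {b\<in>S e. 0 < b \<and> b < c}" using S0 c0 S_range[OF e] by force
  have fin: "finite {b\<in>S e. 0 < b \<and> b < c}" using finS by auto
  show ?thesis unfolding sum_subtractf r unfolding s1 s2 using fin c0 by simp
qed

lemma gseg:
  assumes e: "e \<in> edges G" and c: "c \<in> S e" "c < len G e" and s: "c \<le> s" "s \<le> nxt e c"
  shows "g x e s = val x e c + sl x e c (nxt e c) * (s - c)"
proof -
  note nc = nxt[OF e c]
  define T where "T a = sl x e a (nxt e a) * (max a (min s (nxt e a)) - a)" for a
  have T: "T a = (if a < c then val x e (nxt e a) - val x e a else 0)
      + (if a = c then sl x e c (nxt e c) * (s - c) else 0)" if a: "a \<in> S e - {len G e}" for a
  proof -
    have al: "a < len G e" using a S_range[OF e] by force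
    note na = nxt[OF e _ al]
    consider "a < c" | "a = c" | "c < a" by linarith
    then show ?thesis
    proof cases
      case 1
      then have "nxt e a \<le> c" using na(3)[of c] a c by auto
      then have "max a (min s (nxt e a)) = nxt e a" using na(2)[of] a s by auto
      then show ?thesis using 1 na(2) a unfolding T_def sl_def by auto
    next
      case 2
      then show ?thesis using s unfolding T_def by auto
    next
      case 3
      then have "nxt e c \<le> a" using nc(3) a by auto
      then have "max a (min s (nxt e a)) = a" using na(2) a s by auto
      then show ?thesis using 3 unfolding T_def by auto
    qed
  qed
  have "(\<Sum>a\<in>S e - {len G e}. T a) = (\<Sum>a\<in>S e - {len G e}. (if a < c then val x e (nxt e a) - val x e a else 0))
      + (\<Sum>a\<in>S e - {len G e}. (if a = c then sl x e c (nxt e c) * (s - c) else 0))"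
    using T by (simp add: sum.distrib[symmetric])
  also have "(\<Sum>a\<in>S e - {len G e}. (if a < c then val x e (nxt e a) - val x e a else 0))
      = (\<Sum>a\<in>{a\<in>S e - {len G e}. a < c}. val x e (nxt e a) - val x e a)"
    by (rule sum.inter_filter[symmetric]) (simp add: finS)
  also have "{a\<in>S e - {len G e}. a < c} = {a\<in>S e. a < c}" using c by auto
  also have "(\<Sum>a\<in>S e - {len G e}. (if a = c then sl x e c (nxt e c) * (s - c) else 0)) = sl x e c (nxt e c) * (s - c)"
    using finS c by (simp add: sum.delta')
  finally have "(\<Sum>a\<in>S e - {len G e}. T a) = val x e c - val x e 0 + sl x e c (nxt e c) * (s - c)"
    using tele[OF e c(1)] by simp
  then show ?thesis unfolding g_def T_def using val0 by simp
qed

lemma ip_pt: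
  assumes e: "e \<in> edges G" and s: "0 \<le> s" "s \<le> len G e"
  shows "ip x (pt G e s) = g x e s"
proof -
  have l0: "0 < len G e" using edge_ok[OF e] by simp
  consider "s = 0" | "s = len G e" | "0 < s" "s < len G e" using s by linarith
  then show ?thesis
  proof cases
    case 1
    have "g x e 0 = val x e 0" using gseg[OF e S0 l0, of 0] nxt(2)[OF e S0 l0] by simp
    then show ?thesis using 1 val0 unfolding ip_def pt_def by simp
  next
    case 2
    note p = prv[OF e Slen l0]
    have pl: "prv e (len G e) < len G e" using p(2) .
    have np: "nxt e (prv e (len G e)) = len G e" using nxt_prv[OF e Slen l0] .
    have "g x e (len G e) = val x e (prv e (len G e)) + sl x e (prv e (len G e)) (len G e) * (len G e - prv e (len G e))"
      using gseg[OF e p(1) pl, of "len G e"] np p(2) by simp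
    also have "\<dots> = val x e (len G e)" using p(2) unfolding sl_def by simp
    finally show ?thesis using 2 vallen[OF e] l0 unfolding ip_def pt_def by simp
  next
    case 3
    then show ?thesis unfolding ip_def pt_def by simp
  qed
qed

lemma ip_Q: assumes w: "w \<in> Q" shows "ip x w = x w"
  using w
proof (cases rule: Q_cases)
  case (V v) then show ?thesis unfolding ip_def by simp
next
  case (I e t)
  have "g x e t = val x e t" using gseg[OF I(2,3,5), of t] nxt(2)[OF I(2,3,5)] by simp
  then show ?thesis using I valin[of t e x] unfolding ip_def by simp
qed

lemma sl_ip: assumes e: "e \<in> edges G" and a: "a \<in> S e" and b: "b \<in> S e"
  shows "sl (ip x) e a b = sl x e a b"
  unfolding sl_def val_def using ip_Q pt_Q[OF e a] pt_Q[OF e b] by simp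

lemma DO_ip: assumes w: "w \<in> Q" shows "DO (ip x) w = DO x w"
  using w
proof (cases rule: Q_cases)
  case (V v)
  have a: "sl (ip x) e 0 (nxt e 0) = sl x e 0 (nxt e 0)" if "e \<in> edges G" for e
    using sl_ip[OF that S0 nxt(1)[OF that S0]] edge_ok[OF that] by simp
  have b: "sl (ip x) e (prv e (len G e)) (len G e) = sl x e (prv e (len G e)) (len G e)" if "e \<in> edges G" for e
    using sl_ip[OF that prv(1)[OF that Slen] Slen] edge_ok[OF that] by simp
  show ?thesis unfolding V DO_def using a b by simp
next
  case (I e t)
  then show ?thesis unfolding DO_def
    using sl_ip[OF I(2) I(3) nxt(1)[OF I(2,3,5)]] sl_ip[OF I(2) prv(1)[OF I(2,3,4)] I(3)] by simp
qed

lemma ip_seg: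
  assumes e: "e \<in> edges G" and c: "c \<in> S e" "c < len G e" and s: "c \<le> s" "s \<le> nxt e c"
  shows "ip x (pt G e s) = (val x e c - sl x e c (nxt e c) * c) + sl x e c (nxt e c) * s"
proof -
  have "0 \<le> c" "nxt e c \<le> len G e" using S_range[OF e c(1)] S_range[OF e nxt(1)[OF e c]] by auto
  then show ?thesis using ip_pt[OF e] gseg[OF e c s] s by (simp add: algebra_simps)
qed

lemma ip_qlin: "qlin (ip x)"
  unfolding qlin_def
proof (intro ballI)
  fix e a assume e: "e \<in> edges G" and a: "a \<in> S e - {len G e}"
  have al: "a < len G e" using a S_range[OF e] by force
  have aS: "a \<in> S e" using a by simp
  show "\<exists>\<alpha> \<beta>. \<forall>s\<in>{a..nxt e a}. ip x (pt G e s) = \<alpha> + \<beta> * s"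
  proof (intro exI ballI)
    fix s assume "s \<in> {a..nxt e a}"
    then show "ip x (pt G e s) = (val x e a - sl x e a (nxt e a) * a) + sl x e a (nxt e a) * s"
      using ip_seg[OF e aS al] by auto
  qed
qed

lemma ip_cont: assumes e: "e \<in> edges G" shows "continuous_on {0..len G e} (\<lambda>s. ip x (pt G e s))"
proof -
  have "continuous_on {0..len G e} (g x e)" unfolding g_def by (intro continuous_intros)
  then show ?thesis by (rule continuous_on_cong[THEN iffD1, rotated 2]) (auto simp: ip_pt[OF e])
qed

end

context qg begin

lemma ip_potential:
  assumes Qsm: "\<forall>w\<in>Q. w \<in> Vert ` verts G \<or> w \<in> {y, z, a1, a2}"
    and inQ: "{y, z, a1, a2} \<subseteq> Q" and d: "dpot a1 a2 y z x"
  shows "potential G {a1, a2} y z (ip x)"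
  unfolding potential_def
proof (intro conjI)
  show "\<forall>e\<in>edges G. continuous_on {0..len G e} (\<lambda>s. ip x (pt G e s))" using ip_cont by blast
next
  show "\<forall>e\<in>edges G. \<forall>a b. 0 \<le> a \<and> a \<le> b \<and> b \<le> len G e \<and>
         (\<forall>s. a < s \<and> s < b \<longrightarrow> pt G e s \<notin> {y, z} \<union> {a1, a2}) \<longrightarrow>
         (\<exists>\<alpha> \<beta>. \<forall>s\<in>{a..b}. ip x (pt G e s) = \<alpha> + \<beta> * s)"
  proof (intro ballI allI impI)
    fix e a b assume e: "e \<in> edges G" and H: "0 \<le> a \<and> a \<le> b \<and> b \<le> len G e \<and>
         (\<forall>s. a < s \<and> s < b \<longrightarrow> pt G e s \<notin> {y, z} \<union> {a1, a2})"
    have inner_bad: "False" if r: "a < r" "r < b" "r \<in> S e" for r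
    proof -
      have "0 < r" "r < len G e" using r H by auto
      then have "pt G e r = Inner e r" "Inner e r \<in> Q" using S_inner[OF r(3)] unfolding pt_def by auto
      then have "pt G e r \<in> {y, z} \<union> {a1, a2}" using Qsm by auto
      then show False using H r by auto
    qed
    show "\<exists>\<alpha> \<beta>. \<forall>s\<in>{a..b}. ip x (pt G e s) = \<alpha> + \<beta> * s"
    proof (cases "a = b")
      case True
      show ?thesis by (rule exI[of _ "ip x (pt G e a)"], rule exI[of _ 0]) (use True in auto)
    next
      case False
      define m where "m = (a + b) / 2"
      have m: "a < m" "m < b" "0 \<le> m" "m \<le> len G e" using H False unfolding m_def by auto
      obtain c where c: "c \<in> S e" "c < len G e" "c \<le> m" "m \<le> nxt e c"
        using seg_exists[OF e m(3,4)] by blast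
      have ca: "c \<le> a" using inner_bad[of c] c m by force
      have nb: "b \<le> nxt e c" using inner_bad[of "nxt e c"] nxt(1)[OF e c(1,2)] c m by force
      show ?thesis
      proof (intro exI ballI)
        fix s assume "s \<in> {a..b}"
        then show "ip x (pt G e s) = (val x e c - sl x e c (nxt e c) * c) + sl x e c (nxt e c) * s"
          using ip_seg[OF e c(1,2)] ca nb by auto
      qed
    qed
  qed
next
  show "\<forall>w\<in>{a1, a2}. \<forall>w'\<in>{a1, a2}. ip x w = ip x w'"
    using d inQ ip_Q unfolding dpot_def by auto
next
  show "\<forall>w\<in>points G. (\<Sum>w'\<in>cls {a1, a2} w. outslope G (ip x) w') =
          (if z \<in> cls {a1, a2} w then 1 else 0) - (if y \<in> cls {a1, a2} w then 1 else 0)"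
  proof
    fix w assume wp: "w \<in> points G"
    show "(\<Sum>w'\<in>cls {a1, a2} w. outslope G (ip x) w') =
          (if z \<in> cls {a1, a2} w then 1 else 0) - (if y \<in> cls {a1, a2} w then 1 else 0)"
    proof (cases "w \<in> Q")
      case True
      have os: "outslope G (ip x) w' = DO x w'" if "w' \<in> Q" for w'
        using outslope_q[OF ip_qlin that] DO_ip[OF that] by simp
      show ?thesis
      proof (cases "w \<in> {a1, a2}")
        case True
        have "(\<Sum>w'\<in>{a1, a2}. outslope G (ip x) w') = (\<Sum>w'\<in>{a1, a2}. DO x w')"
          using os inQ by (intro sum.cong) auto
        then show ?thesis using True d unfolding cls_def dpot_def ind_def by simp
      next
        case False
        then show ?thesis using d os[OF \<open>w \<in> Q\<close>] \<open>w \<in> Q\<close> unfolding cls_def dpot_def ind_def by auto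
      qed
    next
      case False
      then obtain e r where w: "w = Inner e r" "e \<in> edges G" "0 < r" "r < len G e"
        using wp VQ unfolding points_def by auto
      have rS: "r \<notin> S e" using False w unfolding S_def by auto
      define c where "c = Max {a \<in> S e. a \<le> r}"
      note sm = seg_max[OF w(2) w(3)[THEN less_imp_le] w(4), folded c_def]
      have cr: "c < r" using sm rS by (cases "c = r") auto
      have nl: "nxt e c \<le> len G e" using S_range[OF w(2) nxt(1)[OF w(2) sm(1,3)]] by simp
      have c0: "0 \<le> c" using S_range[OF w(2) sm(1)] by simp
      have aff: "\<forall>s\<in>{c..nxt e c}. ip x (pt G e s) = (val x e c - sl x e c (nxt e c) * c) + sl x e c (nxt e c) * s"
        using ip_seg[OF w(2) sm(1,3)] by auto
      have "rslope G (ip x) e r = sl x e c (nxt e c)"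
        using rslope_aff[OF cr[THEN less_imp_le] sm(4) nl aff] .
      moreover have "lslope G (ip x) e r = sl x e c (nxt e c)"
        using lslope_aff[OF cr sm(4)[THEN less_imp_le] c0 aff] .
      moreover have "w \<notin> {a1, a2}" "z \<noteq> w" "y \<noteq> w" using False inQ by auto
      ultimately show ?thesis unfolding cls_def w by simp
    qed
  qed
qed

end

lemma pot_single:
  fixes G :: "('v, 'e) mgraph" and y z :: "('v, 'e) point"
  shows "potential G {z} y z f = potential G {} y z f"
proof -
  have c: "cls {z} w = cls {} w" for w :: "('v,'e) point" unfolding cls_def by auto
  have u: "{y, z} \<union> {z} = {y, z} \<union> {}" by auto
  show ?thesis unfolding potential_def c u by simp
qed

lemma qg_mk:
  assumes mg: "metrized_graph G" and B: "B \<subseteq> points G" "finite B"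
  shows "qg G (Vert ` verts G \<union> B)"
proof
  show "metrized_graph G" by fact
  show "finite (Vert ` verts G \<union> B)" using mg B unfolding metrized_graph_def by auto
  show "Vert ` verts G \<union> B \<subseteq> points G" using B unfolding points_def by auto
  show "Vert ` verts G \<subseteq> Vert ` verts G \<union> B" by auto
qed

lemma exists_pot2:
  assumes mg: "metrized_graph G" and pts: "y \<in> points G" "z \<in> points G" "p \<in> points G" "q \<in> points G"
  shows "\<exists>f. potential G {p, q} y z f \<and> f z = 0"
proof -
  let ?Q = "Vert ` verts G \<union> {y, z, p, q}"
  interpret qg G ?Q using qg_mk[OF mg, of "{y, z, p, q}"] pts by auto
  obtain x where x: "dpot p q y z x" "x z = 0" using dpot_exists[of y z p q] by auto
  have "potential G {p, q} y z (ip x)" by (rule ip_potential) (use x in auto)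
  moreover have "ip x z = 0" using ip_Q[of z x] x by auto
  ultimately show ?thesis by blast
qed

lemma exists_pot0:
  assumes mg: "metrized_graph G" and pts: "y \<in> points G" "z \<in> points G"
  shows "\<exists>f. potential G {} y z f \<and> f z = 0"
proof -
  let ?Q = "Vert ` verts G \<union> {y, z}"
  interpret qg G ?Q using qg_mk[OF mg, of "{y, z}"] pts by auto
  obtain x where x: "dpot z z y z x" "x z = 0" using dpot_exists[of y z z z] by auto
  have "potential G {z, z} y z (ip x)" by (rule ip_potential) (use x in auto)
  moreover have "ip x z = 0" using ip_Q[of z x] x by auto
  ultimately show ?thesis using pot_single[of G z y "ip x"] by auto
qed

context qg begin

lemma DO_cong: assumes fh: "\<forall>w\<in>Q. f w = h w" and w: "w \<in> Q" shows "DO f w = DO h w"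
proof -
  have sl: "sl f e a b = sl h e a b" if "e \<in> edges G" "a \<in> S e" "b \<in> S e" for e a b
    unfolding sl_def val_def using fh pt_Q[OF that(1,2)] pt_Q[OF that(1,3)] by simp
  show ?thesis using w
  proof (cases rule: Q_cases)
    case (V v)
    have a: "sl f e 0 (nxt e 0) = sl h e 0 (nxt e 0)" if "e \<in> edges G" for e
      using sl[OF that S0 nxt(1)[OF that S0]] edge_ok[OF that] by simp
    have b: "sl f e (prv e (len G e)) (len G e) = sl h e (prv e (len G e)) (len G e)" if "e \<in> edges G" for e
      using sl[OF that prv(1)[OF that Slen] Slen] edge_ok[OF that] by simp
    show ?thesis unfolding V DO_def using a b by simp
  next
    case (I e t)
    then show ?thesis unfolding DO_def
      using sl[OF I(2) I(3) nxt(1)[OF I(2,3,5)]] sl[OF I(2) prv(1)[OF I(2,3,4)] I(3)] by simp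
  qed
qed

lemma DO_const: assumes "\<forall>w\<in>Q. f w = c" "w \<in> Q" shows "DO f w = 0"
proof -
  have "DO f w = DO (\<lambda>_. c) w" using DO_cong assms by auto
  also have "\<dots> = 0" unfolding DO_def sl_def val_def by (cases w) auto
  finally show ?thesis .
qed

lemma volt0:
  assumes P: "potential G {} y z f" and f0: "f z = 0" and Q: "x \<in> Q" "y \<in> Q" "z \<in> Q"
  shows "voltage G {} z x y = f x"
  unfolding voltage_def
proof (rule the_equality)
  show "\<exists>h. potential G {} y z h \<and> h z = 0 \<and> h x = f x" using P f0 by blast
next
  fix v assume "\<exists>h. potential G {} y z h \<and> h z = 0 \<and> h x = v"
  then obtain h where h: "potential G {} y z h" "h z = 0" "h x = v" by blast
  have d1: "dpot z z y z h" using pot_dpot0[OF h(1)] Q by auto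
  have d2: "dpot z z y z f" using pot_dpot0[OF P] Q by auto
  show "v = f x" using dpot_unique[OF d1 d2 Q(2,3,3,3)] h f0 Q by auto
qed

lemma volt2:
  assumes P: "potential G {p, q} y z f" and f0: "f z = 0" and Q: "x \<in> Q" "y \<in> Q" "z \<in> Q" "p \<in> Q" "q \<in> Q"
    and pq: "p \<noteq> q"
  shows "voltage G {p, q} z x y = f x"
  unfolding voltage_def
proof (rule the_equality)
  show "\<exists>h. potential G {p, q} y z h \<and> h z = 0 \<and> h x = f x" using P f0 by blast
next
  fix v assume "\<exists>h. potential G {p, q} y z h \<and> h z = 0 \<and> h x = v"
  then obtain h where h: "potential G {p, q} y z h" "h z = 0" "h x = v" by blast
  have d1: "dpot p q y z h" using pot_dpot2[OF h(1) pq] Q by auto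
  have d2: "dpot p q y z f" using pot_dpot2[OF P pq] Q by auto
  show "v = f x" using dpot_unique[OF d1 d2 Q(2,3,4,5)] h f0 Q by auto
qed

lemma En0: "dpot z z y z f \<Longrightarrow> y \<in> Q \<Longrightarrow> z \<in> Q \<Longrightarrow> En f h = h y - h z"
  using En_dpot[of z z y z f h] by simp

end

theorem theorem2p7:
  fixes G :: "('v, 'e) mgraph" and p q s t u :: "('v, 'e) point"
  assumes "metrized_graph G"
    and "p \<in> points G" "q \<in> points G" "s \<in> points G" "t \<in> points G" "u \<in> points G"
    and "p \<noteq> q"
  shows "jv G u t s = jpq G p q u t s +
           ((jv G p q t - jv G p q u)\<^sup>2 + (jv G p q s - jv G p q u)\<^sup>2
              - (jv G p q t - jv G p q s)\<^sup>2) / (2 * reff G p q)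
       \<and> jpq G p q u t s +
           ((jv G p q t - jv G p q u)\<^sup>2 + (jv G p q s - jv G p q u)\<^sup>2
              - (jv G p q t - jv G p q s)\<^sup>2) / (2 * reff G p q)
         = jpq G p q u t s + (1 / reff G p q) * (jv G p q u - jv G p q t) * (jv G p q u - jv G p q s)"
proof -
  note mg = assms(1) and pts = assms(2-6) and pq = assms(7)
  let ?Q = "Vert ` verts G \<union> {p, q, s, t, u}"
  interpret qg G ?Q using qg_mk[OF mg, of "{p, q, s, t, u}"] pts by auto
  have inQ: "p \<in> ?Q" "q \<in> ?Q" "s \<in> ?Q" "t \<in> ?Q" "u \<in> ?Q" by auto
  obtain Gf where Gf: "potential G {} s u Gf" "Gf u = 0" using exists_pot0[OF mg pts(3,5)] by blast
  obtain H where H: "potential G {p, q} s u H" "H u = 0" using exists_pot2[OF mg pts(3,5,1,2)] by blast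
  obtain T where T: "potential G {} t u T" "T u = 0" using exists_pot0[OF mg pts(4,5)] by blast
  obtain \<rho> where \<rho>: "potential G {} q p \<rho>" "\<rho> p = 0" using exists_pot0[OF mg pts(2,1)] by blast
  obtain R where R: "potential G {} p q R" "R q = 0" using exists_pot0[OF mg pts(1,2)] by blast
  obtain Pt where Pt: "potential G {} t p Pt" "Pt p = 0" using exists_pot0[OF mg pts(4,1)] by blast
  obtain Ps where Ps: "potential G {} s p Ps" "Ps p = 0" using exists_pot0[OF mg pts(3,1)] by blast
  obtain Pu where Pu: "potential G {} u p Pu" "Pu p = 0" using exists_pot0[OF mg pts(5,1)] by blast
  have j1: "jv G u t s = Gf t" unfolding jv_def using volt0[OF Gf] inQ by auto
  have j2: "jpq G p q u t s = H t" unfolding jpq_def using volt2[OF H(1) H(2) inQ(4,3,5,1,2) pq] by simp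
  have jt: "jv G p q t = Pt q" unfolding jv_def using volt0[OF Pt] inQ by auto
  have js: "jv G p q s = Ps q" unfolding jv_def using volt0[OF Ps] inQ by auto
  have ju: "jv G p q u = Pu q" unfolding jv_def using volt0[OF Pu] inQ by auto
  have jr: "reff G p q = R p" unfolding reff_def jv_def using volt0[OF R] inQ by auto
  have dGf: "dpot u u s u Gf" using pot_dpot0[OF Gf(1)] inQ by auto
  have dH: "dpot p q s u H" using pot_dpot2[OF H(1) pq] inQ by auto
  have dT: "dpot u u t u T" using pot_dpot0[OF T(1)] inQ by auto
  have d\<rho>: "dpot p p q p \<rho>" using pot_dpot0[OF \<rho>(1)] inQ by auto
  have dR: "dpot q q p q R" using pot_dpot0[OF R(1)] inQ by auto
  have dPt: "dpot p p t p Pt" using pot_dpot0[OF Pt(1)] inQ by auto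
  have dPs: "dpot p p s p Ps" using pot_dpot0[OF Ps(1)] inQ by auto
  have dPu: "dpot p p u p Pu" using pot_dpot0[OF Pu(1)] inQ by auto
  define cH where "cH = DO H p - ind (p = u) + ind (p = s)"
  have EH: "En H h = h s - h u - cH * (h p - h q)" for h
    using En_dpot[OF dH] inQ unfolding cH_def by auto
  have HpHq: "H p = H q" using dH unfolding dpot_def by simp
  have e1: "Gf t = T s" using En0[OF dT, of Gf] En0[OF dGf, of T] En_sym[of T Gf] inQ Gf(2) T(2) by auto
  have e2: "H t = T s - cH * (T p - T q)" using En0[OF dT, of H] EH[of T] En_sym[of T H] inQ H(2) T(2) by auto
  have e3: "T q - T p = \<rho> t - \<rho> u" using En0[OF d\<rho>, of T] En0[OF dT, of \<rho>] En_sym[of \<rho> T] inQ by auto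
  have e4: "0 = \<rho> s - \<rho> u - cH * (\<rho> p - \<rho> q)" using En0[OF d\<rho>, of H] EH[of \<rho>] En_sym[of \<rho> H] inQ HpHq by auto
  have e5t: "Pt q = \<rho> t" using En0[OF d\<rho>, of Pt] En0[OF dPt, of \<rho>] En_sym[of \<rho> Pt] inQ Pt(2) \<rho>(2) by auto
  have e5s: "Ps q = \<rho> s" using En0[OF d\<rho>, of Ps] En0[OF dPs, of \<rho>] En_sym[of \<rho> Ps] inQ Ps(2) \<rho>(2) by auto
  have e5u: "Pu q = \<rho> u" using En0[OF d\<rho>, of Pu] En0[OF dPu, of \<rho>] En_sym[of \<rho> Pu] inQ Pu(2) \<rho>(2) by auto
  have e6: "R p = \<rho> q" using En0[OF d\<rho>, of R] En0[OF dR, of \<rho>] En_sym[of \<rho> R] inQ R(2) \<rho>(2) by auto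
  have r0: "\<rho> q \<noteq> 0"
  proof
    assume z: "\<rho> q = 0"
    have "En \<rho> \<rho> = 0" using En0[OF d\<rho>, of \<rho>] inQ z \<rho>(2) by auto
    then have c: "\<forall>w\<in>?Q. \<rho> w = \<rho> p"
    proof (intro ballI)
      fix w assume "En \<rho> \<rho> = 0" "w \<in> ?Q"
      then show "\<rho> w = \<rho> p" by (rule En_self_zero[OF _ _ inQ(1)])
    qed
    have qQ: "q \<in> ?Q - {p, p}" using pq by auto
    have "DO \<rho> q = 0" by (rule DO_const[OF c inQ(2)])
    moreover have "DO \<rho> q = ind (q = p) - ind (q = q)"
      using bspec[OF d\<rho>[unfolded dpot_def, THEN conjunct1] qQ] .
    ultimately show False using pq unfolding ind_def by simp
  qed
  have "cH * \<rho> q = \<rho> u - \<rho> s" using e4 \<rho>(2) by (simp add: algebra_simps)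
  then have cH: "cH = (\<rho> u - \<rho> s) / \<rho> q" using r0 by (simp add: eq_divide_eq)
  have "T p - T q = \<rho> u - \<rho> t" using e3 by simp
  then have "Gf t = H t + cH * (\<rho> u - \<rho> t)" using e1 e2 by simp
  then have main: "Gf t = H t + (\<rho> u - \<rho> t) * (\<rho> u - \<rho> s) / \<rho> q" unfolding cH by simp
  have sq: "(\<rho> t - \<rho> u)\<^sup>2 + (\<rho> s - \<rho> u)\<^sup>2 - (\<rho> t - \<rho> s)\<^sup>2 = 2 * ((\<rho> u - \<rho> t) * (\<rho> u - \<rho> s))"
    by (simp add: power2_eq_square algebra_simps)
  have id: "((\<rho> t - \<rho> u)\<^sup>2 + (\<rho> s - \<rho> u)\<^sup>2 - (\<rho> t - \<rho> s)\<^sup>2) / (2 * \<rho> q) = (\<rho> u - \<rho> t) * (\<rho> u - \<rho> s) / \<rho> q"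
    unfolding sq by simp
  show ?thesis unfolding j1 j2 jt js ju jr e5t e5s e5u e6 main id by simp
qed

end
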